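(* Let $n\ge1$, $\mu_c>0$, $\lambda_1,\dots,\lambda_n>0$, $\mathbf{D}=\mathrm{diag}(\lambda_1,\dots,\lambda_n)$, $\mathbf{C}$ an $n\times n$ symmetric positive definite matrix with unit diagonal, and $\hat\lambda_1,\dots,\hat\lambda_n$ the eigenvalues of $\mathbf{D}\mathbf{C}$. Let $G_1,\dots,G_n$ be i.i.d. Gamma$(\mu_c,1)$ random variables, and let $S\ge0$ be a random variable independent of $(G_1,\dots,G_n)$. Put $I=\sum_{i=1}^n\lambda_iG_i$ and $\hat I=\sum_{i=1}^n\hat\lambda_iG_i$. Then $I\le_{cx}\hat I$, and (whenever the expectations exist) $$\hat R:=\mathbb{E}\left[\ln\left(1+\frac{S}{\hat I}\right)\right]\ \ge\ R:=\mathbb{E}\left[\ln\left(1+\frac{S}{I}\right)\right].$$ In particular, when both the user channel and the interferers experience $\eta$-$\mu$ fading (with $n=2N$, $\lambda_{2i-1}=\frac{d_i^{-\alpha}}{\mu_c(1+\eta_i^{-1})}$, $\lambda_{2i}=\frac{d_i^{-\alpha}}{\mu_c(1+\eta_i)}$), the rate with positively correlated interferers is at least the rate with independent interferers.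
   Context: $X\le_{cx}Y$ (convex order) means $\mathbb{E}[\phi(X)]\le\mathbb{E}[\phi(Y)]$ for every convex $\phi:\mathbb{R}\to\mathbb{R}$ for which the expectations exist. Gamma$(a,\theta)$ denotes the gamma law with shape $a$ and scale $\theta$. In the application $S$ is the user's received signal power ($\eta$-$\mu$ power times $r^{-\alpha}$), $I$ the total interference power from $N$ independent $\eta$-$\mu$ interferers with common $\mu=\mu_c$ at distances $d_i$ with parameters $\eta_i$ (each $\eta$-$\mu$ power being a sum of two independent gamma variables), and $\hat I$ the total interference in the correlated case, with $\mathbf{C}$ the correlation matrix with entries $\sqrt{\rho_{ij}}$, $\rho_{ij}\in[0,1]$. *)

theory Defs
  imports "HOL-Probability.Probability"
begin

definition gamma_density :: "real \<Rightarrow> real \<Rightarrow> real" where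
  "gamma_density a x = (if 0 < x then x powr (a - 1) * exp (- x) / Gamma a else 0)"

definition cx_le :: "'a measure \<Rightarrow> ('a \<Rightarrow> real) \<Rightarrow> ('a \<Rightarrow> real) \<Rightarrow> bool" where
  "cx_le M X Y \<longleftrightarrow>
     (\<forall>\<phi> :: real \<Rightarrow> real. convex_on UNIV \<phi> \<longrightarrow>
        integrable M (\<lambda>\<omega>. \<phi> (X \<omega>)) \<longrightarrow> integrable M (\<lambda>\<omega>. \<phi> (Y \<omega>)) \<longrightarrow>
        (\<integral>\<omega>. \<phi> (X \<omega>) \<partial>M) \<le> (\<integral>\<omega>. \<phi> (Y \<omega>) \<partial>M))"

definition sym_pos_def :: "real^'n^'n \<Rightarrow> bool" where
  "sym_pos_def C \<longleftrightarrow> transpose C = C \<and> (\<forall>x. x \<noteq> 0 \<longrightarrow> x \<bullet> (C *v x) > 0)"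

definition diag_mat :: "('n \<Rightarrow> real) \<Rightarrow> real^'n^'n" where
  "diag_mat l = (\<chi> i j. if i = j then l i else 0)"

text \<open>lam lists the eigenvalues of A counted with algebraic multiplicity, i.e.
  the characteristic polynomial of A is the product of (x - lam i).\<close>
definition eigenvalues_of :: "real^'n^'n \<Rightarrow> ('n::finite \<Rightarrow> real) \<Rightarrow> bool" where
  "eigenvalues_of A lam \<longleftrightarrow> (\<forall>x::real. det (x *\<^sub>R mat 1 - A) = (\<Prod>i\<in>UNIV. x - lam i))"

end

theory Submission
  imports Defs "HOL-Computational_Algebra.Polynomial"
begin

lemma sym_inner:
  fixes A :: "real^'n^'n"
  assumes "transpose A = A"
  shows "x \<bullet> (A *v y) = (A *v x) \<bullet> y"
proof -
  have s: "\<And>i j. A $ i $ j = A $ j $ i" using assms by (metis transpose_def vec_lambda_beta)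
  have "x \<bullet> (A *v y) = (\<Sum>i\<in>UNIV. \<Sum>j\<in>UNIV. x $ i * A $ i $ j * y $ j)"
    by (simp add: inner_vec_def matrix_vector_mult_def sum_distrib_left mult.assoc)
  also have "\<dots> = (\<Sum>j\<in>UNIV. \<Sum>i\<in>UNIV. x $ i * A $ i $ j * y $ j)" by (rule sum.swap)
  also have "\<dots> = (\<Sum>j\<in>UNIV. (\<Sum>i\<in>UNIV. A $ j $ i * x $ i) * y $ j)"
    unfolding sum_distrib_right
  proof (intro sum.cong refl)
    fix i j
    have "A $ i $ j = A $ j $ i" by (rule s)
    then show "x $ i * A $ i $ j * y $ j = A $ j $ i * x $ i * y $ j" by simp
  qed
  also have "\<dots> = (A *v x) \<bullet> y"
    by (simp add: inner_vec_def matrix_vector_mult_def)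
  finally show ?thesis .
qed

lemma quad_zero:
  fixes a q :: real
  assumes "\<forall>t. 2 * t * a + t^2 * q \<le> 0"
  shows "a = 0"
proof -
  define s where "s = \<bar>q\<bar> + 1"
  have s0: "s > 0" unfolding s_def by simp
  have "2 * (a / s) * a + (a / s)^2 * q \<le> 0" using assms by blast
  then have "(2 * (a / s) * a + (a / s)^2 * q) * s^2 \<le> 0"
    using s0 by (simp add: mult_nonpos_nonneg)
  moreover have "(2 * (a / s) * a + (a / s)^2 * q) * s^2 = a^2 * (2 * s + q)"
    using s0 by (simp add: field_simps power2_eq_square)
  ultimately have "a^2 * (2 * s + q) \<le> 0" by simp
  moreover have "2 * s + q > 0" unfolding s_def by (auto simp: abs_if)
  ultimately have "a^2 \<le> 0" by (simp add: mult_le_0_iff)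
  then show ?thesis by simp
qed

definition ONE :: "real^'n^'n \<Rightarrow> (real^'n) set \<Rightarrow> bool" where
  "ONE A B \<longleftrightarrow> finite B \<and> (\<forall>b\<in>B. b \<bullet> b = 1) \<and> (\<forall>b\<in>B. \<forall>b'\<in>B. b \<noteq> b' \<longrightarrow> b \<bullet> b' = 0)
     \<and> (\<forall>b\<in>B. \<exists>\<mu>. A *v b = \<mu> *\<^sub>R b)"

lemma exists_orth_nonzero:
  fixes B :: "(real^'n) set"
  assumes fin: "finite B" and nrm: "\<forall>b\<in>B. b \<bullet> b = 1" and orth: "\<forall>b\<in>B. \<forall>b'\<in>B. b \<noteq> b' \<longrightarrow> b \<bullet> b' = 0"
    and card: "card B < CARD('n)"
  shows "\<exists>v. v \<noteq> 0 \<and> (\<forall>b\<in>B. b \<bullet> v = 0)"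
proof -
  have "\<not> UNIV \<subseteq> span B"
  proof
    assume "UNIV \<subseteq> span B"
    then have "dim (UNIV :: (real^'n) set) \<le> card B" using span_card_ge_dim[of B UNIV] fin by auto
    then show False using card by simp
  qed
  then obtain w where w: "w \<notin> span B" by blast
  define v where "v = w - (\<Sum>b\<in>B. (b \<bullet> w) *\<^sub>R b)"
  have "(\<Sum>b\<in>B. (b \<bullet> w) *\<^sub>R b) \<in> span B"
    by (intro span_sum span_mul span_base)
  then have "v \<noteq> 0" using w unfolding v_def
    by (metis eq_iff_diff_eq_0)
  moreover have "\<forall>b'\<in>B. b' \<bullet> v = 0"
  proof
    fix b' assume b': "b' \<in> B"
    have "b' \<bullet> (\<Sum>b\<in>B. (b \<bullet> w) *\<^sub>R b) = (\<Sum>b\<in>B. (b \<bullet> w) * (b' \<bullet> b))"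
      by (simp add: inner_sum_right)
    also have "\<dots> = (\<Sum>b\<in>{b'}. (b \<bullet> w) * (b' \<bullet> b))"
      by (rule sum.mono_neutral_right) (use fin b' orth in auto)
    also have "\<dots> = b' \<bullet> w" using nrm b' by simp
    finally show "b' \<bullet> v = 0" by (simp add: v_def inner_diff_right)
  qed
  ultimately show ?thesis by blast
qed

lemma eig_step:
  fixes A :: "real^'n^'n"
  assumes sym: "transpose A = A" and one: "ONE A B" and card: "card B < CARD('n)"
  shows "\<exists>u. u \<bullet> u = 1 \<and> (\<forall>b\<in>B. b \<bullet> u = 0) \<and> (\<exists>\<mu>. A *v u = \<mu> *\<^sub>R u)"
proof -
  have fin: "finite B" and nrm: "\<forall>b\<in>B. b \<bullet> b = 1" and orth: "\<forall>b\<in>B. \<forall>b'\<in>B. b \<noteq> b' \<longrightarrow> b \<bullet> b' = 0"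
    and eig: "\<forall>b\<in>B. \<exists>\<mu>. A *v b = \<mu> *\<^sub>R b" using one unfolding ONE_def by auto
  obtain v where v: "v \<noteq> 0" "\<forall>b\<in>B. b \<bullet> v = 0" using exists_orth_nonzero[OF fin nrm orth card] by blast
  define K where "K = sphere (0::real^'n) 1 \<inter> (\<Inter>b\<in>B. {x. b \<bullet> x = 0})"
  have Kc: "compact K" unfolding K_def
    by (intro compact_Int_closed compact_sphere closed_INT ballI closed_hyperplane)
  have "v /\<^sub>R norm v \<in> K" using v by (auto simp: K_def)
  then have Kne: "K \<noteq> {}" by blast
  have cont: "continuous_on K (\<lambda>x. x \<bullet> (A *v x))"
    by (intro continuous_intros)
  obtain u where u: "u \<in> K" and umax: "\<And>y. y \<in> K \<Longrightarrow> y \<bullet> (A *v y) \<le> u \<bullet> (A *v u)"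
    using continuous_attains_sup[OF Kc Kne cont] by blast
  define m where "m = u \<bullet> (A *v u)"
  have uu: "u \<bullet> u = 1" using u by (simp add: K_def norm_eq_1)
  have uB: "\<forall>b\<in>B. b \<bullet> u = 0" using u by (simp add: K_def)
  have Kmem: "\<And>x. x \<bullet> x = 1 \<Longrightarrow> (\<forall>b\<in>B. b \<bullet> x = 0) \<Longrightarrow> x \<in> K"
    by (simp add: K_def norm_eq_1)
  have key: "w \<bullet> (A *v u) = 0" if wB: "\<forall>b\<in>B. b \<bullet> w = 0" and wu: "w \<bullet> u = 0" for w
  proof -
    define a where "a = w \<bullet> (A *v u)"
    define q where "q = w \<bullet> (A *v w) - m * (w \<bullet> w)"
    have "2 * t * a + t^2 * q \<le> 0" for t
    proof -
      define z where "z = u + t *\<^sub>R w"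
      have zz: "z \<bullet> z = 1 + t^2 * (w \<bullet> w)"
        using uu wu by (simp add: z_def inner_add_left inner_add_right inner_commute power2_eq_square)
      have zpos: "z \<bullet> z > 0" using zz by (simp add: add_pos_nonneg)
      define y where "y = z /\<^sub>R norm z"
      have nz: "norm z > 0" using zpos by (metis inner_zero_left order_less_irrefl zero_less_norm_iff)
      have "y \<bullet> y = 1" unfolding y_def using nz by (simp add: power2_norm_eq_inner[symmetric] power2_eq_square field_simps)
      moreover have "\<forall>b\<in>B. b \<bullet> y = 0" unfolding y_def z_def
        using uB wB by (simp add: inner_add_right)
      ultimately have "y \<in> K" by (rule Kmem)
      then have "y \<bullet> (A *v y) \<le> m" using umax m_def by blast
      moreover have "y \<bullet> (A *v y) = (z \<bullet> (A *v z)) / (z \<bullet> z)"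
        unfolding y_def using nz
        by (simp add: matrix_vector_mult_scaleR power2_norm_eq_inner[symmetric] power2_eq_square field_simps)
      ultimately have "z \<bullet> (A *v z) \<le> m * (z \<bullet> z)" using zpos by (simp add: divide_le_eq)
      moreover have "z \<bullet> (A *v z) = m + 2 * t * a + t^2 * (w \<bullet> (A *v w))"
      proof -
        have "u \<bullet> (A *v w) = w \<bullet> (A *v u)" using sym_inner[OF sym, of u w] by (simp add: inner_commute)
        then show ?thesis
          by (simp add: z_def a_def m_def matrix_vector_right_distrib matrix_vector_mult_scaleR
              inner_add_left inner_add_right power2_eq_square algebra_simps)
      qed
      ultimately show ?thesis using zz by (simp add: q_def algebra_simps)
    qed
    then show ?thesis using quad_zero a_def by blast
  qed
  have AuB: "\<forall>b\<in>B. b \<bullet> (A *v u) = 0"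
  proof
    fix b assume b: "b \<in> B"
    obtain \<mu> where "A *v b = \<mu> *\<^sub>R b" using eig b by blast
    then have "b \<bullet> (A *v u) = \<mu> * (b \<bullet> u)" using sym_inner[OF sym, of b u] by simp
    then show "b \<bullet> (A *v u) = 0" using uB b by simp
  qed
  define w where "w = A *v u - m *\<^sub>R u"
  have wB: "\<forall>b\<in>B. b \<bullet> w = 0" using AuB uB by (simp add: w_def inner_diff_right)
  have wu: "w \<bullet> u = 0" unfolding w_def m_def by (simp add: inner_diff_left inner_commute[of "A *v u" u] uu)
  have "w \<bullet> w = w \<bullet> (A *v u) - m * (w \<bullet> u)" by (simp add: w_def inner_diff_right)
  then have "w \<bullet> w = 0" using key[OF wB wu] wu by simp
  then have "w = 0" by simp
  then have "A *v u = m *\<^sub>R u" by (simp add: w_def)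
  then show ?thesis using uu uB by blast
qed

lemma ONE_exists:
  fixes A :: "real^'n^'n"
  assumes sym: "transpose A = A"
  shows "k \<le> CARD('n) \<Longrightarrow> \<exists>B. ONE A B \<and> card B = k"
proof (induction k)
  case 0
  then show ?case by (intro exI[of _ "{}"]) (simp add: ONE_def)
next
  case (Suc k)
  then obtain B where B: "ONE A B" "card B = k" by auto
  obtain u where u: "u \<bullet> u = 1" "\<forall>b\<in>B. b \<bullet> u = 0" "\<exists>\<mu>. A *v u = \<mu> *\<^sub>R u"
    using eig_step[OF sym B(1)] B(2) Suc.prems by auto
  have uB: "u \<notin> B" using u by auto
  have "ONE A (insert u B)"
    using B(1) u unfolding ONE_def by (auto simp: inner_commute)
  moreover have "card (insert u B) = Suc k" using B uB unfolding ONE_def by simp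
  ultimately show ?case by blast
qed

lemma spectral:
  fixes A :: "real^'n^'n"
  assumes sym: "transpose A = A"
  shows "\<exists>(e::'n \<Rightarrow> real^'n) \<mu>. (\<forall>i j. e i \<bullet> e j = (if i = j then 1 else 0)) \<and> (\<forall>j. A *v e j = \<mu> j *\<^sub>R e j)"
proof -
  obtain B where B: "ONE A B" "card B = CARD('n)" using ONE_exists[OF sym] by blast
  have fin: "finite B" using B ONE_def by blast
  obtain e where e: "bij_betw e (UNIV::'n set) B"
    using finite_same_card_bij[of "UNIV::'n set" B] fin B(2) by auto
  have eB: "\<And>j. e j \<in> B" using e bij_betwE by blast
  have inj: "inj e" using e bij_betw_imp_inj_on by blast
  have "\<forall>j. \<exists>\<mu>. A *v e j = \<mu> *\<^sub>R e j" using B(1) eB unfolding ONE_def by blast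
  then obtain \<mu> where \<mu>: "\<And>j. A *v e j = \<mu> j *\<^sub>R e j" by metis
  have "\<forall>i j. e i \<bullet> e j = (if i = j then 1 else 0)"
  proof (intro allI)
    fix i j
    show "e i \<bullet> e j = (if i = j then 1 else 0)"
    proof (cases "i = j")
      case True then show ?thesis using B(1) eB unfolding ONE_def by simp
    next
      case False
      then have "e i \<noteq> e j" using inj by (metis injD)
      then show ?thesis using B(1) eB False unfolding ONE_def by simp
    qed
  qed
  then show ?thesis using \<mu> by blast
qed

lemma order_prod_lin:
  fixes a :: "'i \<Rightarrow> real"
  assumes "finite A"
  shows "order c (\<Prod>i\<in>A. [:- a i, 1:]) = card {i\<in>A. a i = c}"
  using assms
proof (induction A rule: finite_induct)
  case empty
  then show ?case by (simp add: order_0I)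
next
  case (insert k A)
  have nz: "(\<Prod>i\<in>A. [:- a i, 1:]) \<noteq> 0" by (simp add: insert.hyps(1))
  have "order c (\<Prod>i\<in>insert k A. [:- a i, 1:]) = order c ([:- a k, 1:] * (\<Prod>i\<in>A. [:- a i, 1:]))"
    using insert.hyps by simp
  also have "\<dots> = order c [:- a k, 1:] + order c (\<Prod>i\<in>A. [:- a i, 1:])"
  proof (rule order_mult)
    have "[:- a k, 1:] \<noteq> (0::real poly)" by simp
    then show "[:- a k, 1:] * (\<Prod>i\<in>A. [:- a i, 1:]) \<noteq> 0" using nz by (simp only: mult_eq_0_iff) simp
  qed
  also have "order c [:- a k, 1:] = (if a k = c then 1 else 0)"
  proof (cases "a k = c")
    case True
    then show ?thesis using order_power_n_n[of c 1] by simp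
  next
    case False
    then have "order c [:- a k, 1:] = 0" by (intro order_0I) simp
    then show ?thesis using False by simp
  qed
  finally have eq: "order c (\<Prod>i\<in>insert k A. [:- a i, 1:]) = (if a k = c then 1 else 0) + card {i\<in>A. a i = c}"
    using insert.IH by simp
  have "{i\<in>insert k A. a i = c} = (if a k = c then insert k {i\<in>A. a i = c} else {i\<in>A. a i = c})"
    by auto
  then show ?case using eq insert.hyps by auto
qed

lemma fiber_card_eq:
  fixes a b :: "'n::finite \<Rightarrow> real"
  assumes "\<forall>x. (\<Prod>i\<in>UNIV. x - a i) = (\<Prod>i\<in>UNIV. x - b i)"
  shows "card {i. a i = c} = card {i. b i = c}"
proof -
  have "poly (\<Prod>i\<in>UNIV. [:- a i, 1:]) = poly (\<Prod>i\<in>UNIV. [:- b i, 1:])"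
    using assms by (simp add: poly_prod fun_eq_iff)
  then have "(\<Prod>i\<in>UNIV. [:- a i, 1:]) = (\<Prod>i\<in>UNIV. [:- b i, 1:])"
    by (simp add: poly_eq_poly_eq_iff)
  then show ?thesis using order_prod_lin[of UNIV c a] order_prod_lin[of UNIV c b] by simp
qed

lemma perm_from_fibers:
  fixes a b :: "'n::finite \<Rightarrow> real"
  assumes "\<And>c. card {i. a i = c} = card {i. b i = c}"
  shows "\<exists>\<sigma>. \<sigma> permutes (UNIV::'n set) \<and> (\<forall>i. b (\<sigma> i) = a i)"
proof -
  have "\<forall>c. \<exists>h. bij_betw h {i. a i = c} {i. b i = c}"
    using assms by (intro allI finite_same_card_bij) auto
  then obtain h where h: "\<And>c. bij_betw (h c) {i. a i = c} {i. b i = c}" by metis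
  define \<sigma> where "\<sigma> i = h (a i) i" for i
  have bs: "\<And>i. b (\<sigma> i) = a i"
  proof -
    fix i
    have "i \<in> {k. a k = a i}" by simp
    then have "h (a i) i \<in> {k. b k = a i}" using bij_betwE[OF h[of "a i"]] by blast
    then show "b (\<sigma> i) = a i" unfolding \<sigma>_def by simp
  qed
  have "inj \<sigma>"
  proof (rule injI)
    fix i j assume e: "\<sigma> i = \<sigma> j"
    then have aij: "a i = a j" using bs by metis
    have inj: "inj_on (h (a i)) {k. a k = a i}" using h[of "a i"] by (rule bij_betw_imp_inj_on)
    have "h (a i) i = h (a i) j" using e aij unfolding \<sigma>_def by simp
    then show "i = j" using inj_onD[OF inj] aij by simp
  qed
  moreover have "surj \<sigma>" using finite_UNIV_inj_surj[OF _ \<open>inj \<sigma>\<close>] by simp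
  ultimately have "bij_betw \<sigma> UNIV UNIV" by (simp add: bij_betw_def)
  then have "\<sigma> permutes UNIV" by (rule bij_imp_permutes) simp
  then show ?thesis using bs by blast
qed

lemma abel_aux:
  fixes c d :: "'i \<Rightarrow> real"
  assumes I: "finite I" and d0: "sum d I = 0"
  shows "finite V \<Longrightarrow> c ` I \<subseteq> V \<Longrightarrow> (\<forall>t. sum d {i\<in>I. c i > t} \<ge> 0) \<Longrightarrow> (\<Sum>i\<in>I. c i * d i) \<ge> 0"
proof (induction "card V" arbitrary: V c rule: less_induct)
  case less
  show ?case
  proof (cases "card V \<le> 1")
    case True
    show ?thesis
    proof (cases "I = {}")
      case True then show ?thesis by simp
    next
      case False
      then obtain i0 where i0: "i0 \<in> I" by blast
      have "\<forall>i\<in>I. c i = c i0"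
      proof
        fix i assume "i \<in> I"
        then have "c i \<in> V" "c i0 \<in> V" using less.prems i0 by auto
        then show "c i = c i0" using True less.prems(1)
          by (metis One_nat_def card_le_Suc0_iff_eq)
      qed
      then have "(\<Sum>i\<in>I. c i * d i) = (\<Sum>i\<in>I. c i0 * d i)" by (intro sum.cong) auto
      also have "\<dots> = c i0 * sum d I" by (simp add: sum_distrib_left)
      finally show ?thesis using d0 by simp
    qed
  next
    case False
    define M where "M = Max V"
    define V' where "V' = V - {M}"
    define M2 where "M2 = Max V'"
    have Vne: "V \<noteq> {}" using False by auto
    have MV: "M \<in> V" using Vne less.prems(1) M_def by simp
    have cardV': "card V' = card V - 1" using MV less.prems(1) V'_def by simp
    have V'ne: "V' \<noteq> {}" using False cardV' by (metis card.empty diff_is_0_eq not_less_eq_eq)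
    have finV': "finite V'" using less.prems(1) V'_def by simp
    have M2V': "M2 \<in> V'" using V'ne finV' M2_def by simp
    have M2le: "M2 \<le> M" using M2V' V'_def M_def less.prems(1) by simp
    have leM2: "\<And>v. v \<in> V' \<Longrightarrow> v \<le> M2" using finV' M2_def by simp
    define c' where "c' i = (if c i = M then M2 else c i)" for i
    have c'V: "c' ` I \<subseteq> V'"
      using less.prems(2) M2V' unfolding c'_def V'_def by auto
    have c'le: "\<And>i. i \<in> I \<Longrightarrow> c' i \<le> M2"
      using c'V leM2 by auto
    have thr: "\<forall>t. sum d {i\<in>I. c' i > t} \<ge> 0"
    proof
      fix t
      show "sum d {i\<in>I. c' i > t} \<ge> 0"
      proof (cases "M2 \<le> t")
        case True
        then have "{i\<in>I. c' i > t} = {}" using c'le by fastforce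
        then show ?thesis by (metis order_refl sum.empty)
      next
        case False
        have "{i\<in>I. c' i > t} = {i\<in>I. c i > t}"
          using False M2le unfolding c'_def by auto
        then show ?thesis using less.prems(3) by simp
      qed
    qed
    have IH: "(\<Sum>i\<in>I. c' i * d i) \<ge> 0"
      using less.hyps[of V' c'] cardV' False finV' c'V thr by simp
    have set_eq: "{i\<in>I. c i > M2} = {i\<in>I. c i = M}"
    proof -
      have "\<And>i. i \<in> I \<Longrightarrow> c i \<noteq> M \<Longrightarrow> c i \<le> M2"
        using less.prems(2) leM2 V'_def by auto
      then show ?thesis using M2le M2V' V'_def by force
    qed
    have "(\<Sum>i\<in>I. c i * d i) = (\<Sum>i\<in>I. c' i * d i) + (\<Sum>i\<in>I. (if c i = M then (M - M2) * d i else 0))"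
      by (subst sum.distrib[symmetric]) (intro sum.cong, auto simp: c'_def algebra_simps)
    also have "(\<Sum>i\<in>I. (if c i = M then (M - M2) * d i else 0)) = (M - M2) * sum d {i\<in>I. c i = M}"
      using I by (simp add: sum.inter_filter[symmetric] sum_distrib_left)
    also have "\<dots> = (M - M2) * sum d {i\<in>I. c i > M2}" using set_eq by simp
    finally have eq: "(\<Sum>i\<in>I. c i * d i) = (\<Sum>i\<in>I. c' i * d i) + (M - M2) * sum d {i\<in>I. c i > M2}" .
    have "sum d {i\<in>I. c i > M2} \<ge> 0" using less.prems(3) by blast
    then have "(M - M2) * sum d {i\<in>I. c i > M2} \<ge> 0" using M2le by simp
    then show ?thesis using eq IH by linarith
  qed
qed

lemma abel_thresh:
  fixes c d :: "'i \<Rightarrow> real"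
  assumes "finite I" "sum d I = 0" "\<forall>t. sum d {i\<in>I. c i > t} \<ge> 0"
  shows "(\<Sum>i\<in>I. c i * d i) \<ge> 0"
  using abel_aux[OF assms(1,2), of "c ` I" c] assms by auto

lemma swap_prop:
  fixes c mu :: "'n::finite \<Rightarrow> real"
  assumes pi: "\<pi> permutes UNIV"
  and mx: "\<forall>\<sigma>. \<sigma> permutes UNIV \<longrightarrow> (\<Sum>i\<in>UNIV. c i * mu (\<sigma> i)) \<le> (\<Sum>i\<in>UNIV. c i * mu (\<pi> i))"
  and ik: "c i > c k"
  shows "mu (\<pi> k) \<le> mu (\<pi> i)"
proof (rule ccontr)
  assume neg: "\<not> mu (\<pi> k) \<le> mu (\<pi> i)"
  have ne: "i \<noteq> k" using ik by auto
  define \<sigma> where "\<sigma> = \<pi> \<circ> Transposition.transpose i k"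
  have sp: "\<sigma> permutes UNIV" unfolding \<sigma>_def
    by (intro permutes_compose pi permutes_swap_id) auto
  define g where "g l = c l * mu (\<sigma> l) - c l * mu (\<pi> l)" for l
  have "(\<Sum>l\<in>UNIV. g l) = (\<Sum>l\<in>{i,k}. g l)"
    by (rule sum.mono_neutral_right) (auto simp: g_def \<sigma>_def)
  also have "\<dots> = (c i - c k) * (mu (\<pi> k) - mu (\<pi> i))"
    using ne by (simp add: g_def \<sigma>_def algebra_simps)
  also have "\<dots> > 0" using ik neg by simp
  finally have "(\<Sum>l\<in>UNIV. g l) > 0" .
  moreover have "(\<Sum>l\<in>UNIV. g l) \<le> 0"
    using mx sp by (simp add: g_def sum_subtractf)
  ultimately show False by simp
qed

lemma top_ineq:
  fixes r mu :: "'n::finite \<Rightarrow> real" and T :: "'n set"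
  assumes r01: "\<And>j. 0 \<le> r j \<and> r j \<le> 1" and rs: "sum r UNIV = real (card T)"
  and top: "\<And>j j'. j \<in> T \<Longrightarrow> j' \<notin> T \<Longrightarrow> mu j' \<le> mu j"
  shows "(\<Sum>j\<in>UNIV. r j * mu j) \<le> sum mu T"
proof -
  obtain m where m1: "\<And>j. j \<in> T \<Longrightarrow> m \<le> mu j" and m2: "\<And>j. j \<notin> T \<Longrightarrow> mu j \<le> m"
  proof (cases "T = {}")
    case True
    show ?thesis by (rule that[of "Max (range mu)"]) (auto simp: True)
  next
    case False
    show ?thesis
    proof (rule that[of "Min (mu ` T)"])
      show "\<And>j. j \<in> T \<Longrightarrow> Min (mu ` T) \<le> mu j" by simp
      show "\<And>j. j \<notin> T \<Longrightarrow> mu j \<le> Min (mu ` T)"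
        using False top by (simp add: Min_ge_iff)
    qed
  qed
  define ind where "ind j = (if j \<in> T then 1 else 0::real)" for j
  have "(\<Sum>j\<in>UNIV. ind j * mu j) = (\<Sum>j\<in>UNIV. if j \<in> T then mu j else 0)"
    by (intro sum.cong) (auto simp: ind_def)
  then have sT: "sum mu T = (\<Sum>j\<in>UNIV. ind j * mu j)"
    by (simp add: sum.If_cases)
  have "(\<Sum>j\<in>UNIV. (ind j - r j) * m) \<le> (\<Sum>j\<in>UNIV. (ind j - r j) * mu j)"
  proof (rule sum_mono)
    fix j
    show "(ind j - r j) * m \<le> (ind j - r j) * mu j"
    proof (cases "j \<in> T")
      case True then show ?thesis using m1[OF True] r01[of j] by (simp add: ind_def mult_left_mono)
    next
      case False then show ?thesis using m2[OF False] r01[of j] by (simp add: ind_def mult_left_mono)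
    qed
  qed
  moreover have "(\<Sum>j\<in>UNIV. (ind j - r j) * m) = 0"
  proof -
    have "(\<Sum>j\<in>UNIV. ind j) = real (card T)" by (simp add: ind_def sum.If_cases)
    then show ?thesis using rs by (simp add: sum_distrib_right[symmetric] sum_subtractf)
  qed
  ultimately have "0 \<le> (\<Sum>j\<in>UNIV. (ind j - r j) * mu j)" by simp
  then show ?thesis using sT by (simp add: left_diff_distrib sum_subtractf)
qed

lemma perm_max_bound:
  fixes P :: "'n::finite \<Rightarrow> 'n \<Rightarrow> real" and c mu :: "'n \<Rightarrow> real"
  assumes P0: "\<And>i j. P i j \<ge> 0" and row: "\<And>i. (\<Sum>j\<in>UNIV. P i j) = 1"
    and col: "\<And>j. (\<Sum>i\<in>UNIV. P i j) = 1"
    and pi: "\<pi> permutes UNIV"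
    and mx: "\<forall>\<sigma>. \<sigma> permutes UNIV \<longrightarrow> (\<Sum>i\<in>UNIV. c i * mu (\<sigma> i)) \<le> (\<Sum>i\<in>UNIV. c i * mu (\<pi> i))"
  shows "(\<Sum>i\<in>UNIV. c i * (\<Sum>j\<in>UNIV. P i j * mu j)) \<le> (\<Sum>i\<in>UNIV. c i * mu (\<pi> i))"
proof -
  define x where "x i = (\<Sum>j\<in>UNIV. P i j * mu j)" for i
  define y where "y i = mu (\<pi> i)" for i
  define d where "d i = y i - x i" for i
  have sx: "sum x UNIV = sum mu UNIV"
  proof -
    have "sum x UNIV = (\<Sum>j\<in>UNIV. \<Sum>i\<in>UNIV. P i j * mu j)"
      unfolding x_def by (rule sum.swap)
    also have "\<dots> = (\<Sum>j\<in>UNIV. (\<Sum>i\<in>UNIV. P i j) * mu j)"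
      by (simp add: sum_distrib_right)
    finally show ?thesis using col by simp
  qed
  have sy: "sum y UNIV = sum mu UNIV"
    unfolding y_def using sum.permute[OF pi, of mu] by (simp add: comp_def)
  have d0: "sum d UNIV = 0" using sx sy by (simp add: d_def sum_subtractf)
  have thr: "\<forall>t. sum d {i\<in>UNIV. c i > t} \<ge> 0"
  proof
    fix t
    define S where "S = {i. c i > t}"
    define T where "T = \<pi> ` S"
    define r where "r j = (\<Sum>i\<in>S. P i j)" for j
    have injp: "inj \<pi>" using pi permutes_inj by blast
    have r01: "\<And>j. 0 \<le> r j \<and> r j \<le> 1"
    proof -
      fix j
      have "r j \<le> (\<Sum>i\<in>UNIV. P i j)" unfolding r_def
        by (rule sum_mono2) (auto simp: P0)
      then show "0 \<le> r j \<and> r j \<le> 1" using col[of j] by (simp add: r_def sum_nonneg P0)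
    qed
    have rs: "sum r UNIV = real (card T)"
    proof -
      have "sum r UNIV = (\<Sum>i\<in>S. \<Sum>j\<in>UNIV. P i j)" unfolding r_def by (rule sum.swap)
      also have "\<dots> = real (card S)" using row by simp
      also have "card S = card T" unfolding T_def using injp
        by (simp add: card_image inj_on_subset)
      finally show ?thesis .
    qed
    have top: "\<And>j j'. j \<in> T \<Longrightarrow> j' \<notin> T \<Longrightarrow> mu j' \<le> mu j"
    proof -
      fix j j' assume jT: "j \<in> T" and j'T: "j' \<notin> T"
      obtain i where i: "i \<in> S" "j = \<pi> i" using jT T_def by auto
      obtain k where k: "j' = \<pi> k" using pi by (metis permutes_surj surj_f_inv_f)
      have "k \<notin> S" using j'T k T_def by auto
      then have "c i > c k" using i S_def by auto
      then show "mu j' \<le> mu j" using swap_prop[OF pi mx] i k by blast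
    qed
    have "sum x S = (\<Sum>j\<in>UNIV. r j * mu j)"
    proof -
      have "sum x S = (\<Sum>j\<in>UNIV. \<Sum>i\<in>S. P i j * mu j)" unfolding x_def by (rule sum.swap)
      then show ?thesis by (simp add: r_def sum_distrib_right)
    qed
    also have "\<dots> \<le> sum mu T" by (rule top_ineq[OF r01 rs top])
    also have "sum mu T = sum y S" unfolding T_def y_def
      using injp by (simp add: sum.reindex inj_on_subset)
    finally have "sum x S \<le> sum y S" .
    then show "sum d {i\<in>UNIV. c i > t} \<ge> 0" by (simp add: S_def d_def sum_subtractf)
  qed
  have "(\<Sum>i\<in>UNIV. c i * d i) \<ge> 0" by (rule abel_thresh[OF _ d0 thr]) simp
  then show ?thesis by (simp add: d_def x_def y_def right_diff_distrib sum_subtractf)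
qed

lemma ds_in_hull:
  fixes P :: "'n::finite \<Rightarrow> 'n \<Rightarrow> real" and mu :: "'n \<Rightarrow> real"
  assumes P0: "\<And>i j. P i j \<ge> 0" and row: "\<And>i. (\<Sum>j\<in>UNIV. P i j) = 1"
    and col: "\<And>j. (\<Sum>i\<in>UNIV. P i j) = 1"
  shows "(\<chi> i. \<Sum>j\<in>UNIV. P i j * mu j) \<in> convex hull {(\<chi> i. mu (\<sigma> i)) | \<sigma>. \<sigma> permutes (UNIV::'n set)}"
proof (rule ccontr)
  define H where "H = {(\<chi> i. mu (\<sigma> i)) | \<sigma>. \<sigma> permutes (UNIV::'n set)}"
  define z where "z = (\<chi> i. \<Sum>j\<in>UNIV. P i j * mu j)"
  assume "z \<notin> convex hull {(\<chi> i. mu (\<sigma> i)) | \<sigma>. \<sigma> permutes (UNIV::'n set)}"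
  then have zn: "z \<notin> convex hull H" unfolding H_def z_def .
  have finH: "finite H"
  proof -
    have "H = (\<lambda>\<sigma>. (\<chi> i. mu (\<sigma> i))) ` {\<sigma>. \<sigma> permutes (UNIV::'n set)}" unfolding H_def by auto
    then show ?thesis using finite_permutations[of "UNIV::'n set"] by simp
  qed
  have "closed (convex hull H)"
    using finH by (simp add: compact_imp_closed finite_imp_compact_convex_hull)
  then obtain a b where ab: "inner a z < b" "\<forall>x\<in>convex hull H. inner a x > b"
    using separating_hyperplane_closed_point[OF convex_convex_hull _ zn] by blast
  define c where "c i = - (a $ i)" for i
  define F where "F \<sigma> = (\<Sum>i\<in>UNIV. c i * mu (\<sigma> i))" for \<sigma> :: "'n \<Rightarrow> 'n"
  define Perms where "Perms = {\<sigma>. \<sigma> permutes (UNIV::'n set)}"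
  have fP: "finite Perms" unfolding Perms_def using finite_permutations by simp
  have neP: "Perms \<noteq> {}" unfolding Perms_def using permutes_id by blast
  have "Max (F ` Perms) \<in> F ` Perms" using fP neP by simp
  then obtain \<pi> where pi: "\<pi> \<in> Perms" "F \<pi> = Max (F ` Perms)" by auto
  have mx: "\<forall>\<sigma>. \<sigma> permutes UNIV \<longrightarrow> F \<sigma> \<le> F \<pi>"
    using pi fP by (auto simp: Perms_def)
  have pip: "\<pi> permutes UNIV" using pi Perms_def by simp
  have ineq: "(\<Sum>i\<in>UNIV. c i * (\<Sum>j\<in>UNIV. P i j * mu j)) \<le> F \<pi>"
    using perm_max_bound[OF P0 row col pip] mx unfolding F_def by blast
  define h where "h = (\<chi> i. mu (\<pi> i))"
  have "h \<in> H" unfolding H_def h_def using pip by blast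
  then have "inner a h > b" using ab(2) hull_subset[of H convex] by blast
  moreover have "inner a z = - (\<Sum>i\<in>UNIV. c i * (\<Sum>j\<in>UNIV. P i j * mu j))"
    by (simp add: inner_vec_def z_def c_def sum_negf)
  moreover have "inner a h = - F \<pi>"
    by (simp add: inner_vec_def h_def c_def F_def sum_negf)
  ultimately show False using ineq ab(1) by simp
qed

lemma diag_left: "(diag_mat a ** M) $ i $ j = a i * M $ i $ j"
  by (simp add: matrix_matrix_mult_def diag_mat_def if_distrib[of "\<lambda>x. x * _"] cong: if_cong)

lemma diag_right: "(M ** diag_mat a) $ i $ j = M $ i $ j * a j"
  by (simp add: matrix_matrix_mult_def diag_mat_def if_distrib[of "\<lambda>x. _ * x"] cong: if_cong)

lemma matrix_sub_ldistrib: "(A::real^'m^'n) ** (B - C) = A ** B - A ** C"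
  by (simp add: matrix_matrix_mult_def vec_eq_iff sum_subtractf right_diff_distrib)

lemma matrix_sub_rdistrib: "((B::real^'m^'n) - C) ** A = B ** A - C ** A"
  by (simp add: matrix_matrix_mult_def vec_eq_iff sum_subtractf left_diff_distrib)

lemma det_diag_mat: "det (diag_mat (a :: 'n::finite \<Rightarrow> real)) = (\<Prod>i\<in>UNIV. a i)"
  by (subst det_diagonal) (auto simp: diag_mat_def)

lemma stepA:
  fixes lam lamh :: "'n::finite \<Rightarrow> real" and C :: "real^'n^'n"
  assumes lam0: "\<forall>i. lam i > 0" and spd: "sym_pos_def C" and diag1: "\<forall>i. C$i$i = 1"
    and eig: "eigenvalues_of (diag_mat lam ** C) lamh"
  shows "(\<forall>i. lamh i > 0) \<and> (\<exists>H u. finite H \<and> (\<forall>x\<in>H. \<exists>\<pi>. \<pi> permutes (UNIV::'n set) \<and> (\<forall>i. x$i = lamh (\<pi> i)))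
            \<and> (\<forall>x\<in>H. u x \<ge> 0) \<and> sum u H = 1 \<and> (\<forall>i. lam i = (\<Sum>x\<in>H. u x * x$i)))"
proof -
  define d where "d i = sqrt (lam i)" for i
  have d0: "\<And>i. d i > 0" using lam0 by (simp add: d_def)
  have dd: "\<And>i. d i * d i = lam i" using lam0 by (simp add: d_def less_imp_le)
  define Dh where "Dh = diag_mat d"
  define Di where "Di = diag_mat (\<lambda>i. 1 / d i)"
  define A where "A = Dh ** C ** Dh"
  have Csym: "\<And>i j. C $ i $ j = C $ j $ i"
    using spd unfolding sym_pos_def_def by (metis transpose_def vec_lambda_beta)
  have Aij: "\<And>i j. A $ i $ j = d i * C $ i $ j * d j"
    by (simp add: A_def Dh_def diag_left diag_right)
  have Asym: "transpose A = A"
    by (simp add: vec_eq_iff transpose_def Aij Csym mult.commute)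
  obtain e :: "'n \<Rightarrow> real^'n" and \<mu> where
    eo: "\<forall>i j. e i \<bullet> e j = (if i = j then 1 else 0)" and ev: "\<forall>j. A *v e j = \<mu> j *\<^sub>R e j"
    using spectral[OF Asym] by blast
  define Q :: "real^'n^'n" where "Q = (\<chi> k j. e j $ k)"
  have QtQ: "transpose Q ** Q = mat 1"
    using eo by (simp add: vec_eq_iff matrix_matrix_mult_def transpose_def Q_def mat_def inner_vec_def)
  then have QQt: "Q ** transpose Q = mat 1" using matrix_left_right_inverse by blast
  have AQ: "A ** Q = Q ** diag_mat \<mu>"
  proof -
    have "\<And>k j. (A ** Q) $ k $ j = (A *v e j) $ k"
      by (simp add: matrix_matrix_mult_def matrix_vector_mult_def Q_def)
    then show ?thesis using ev by (simp add: vec_eq_iff diag_right Q_def)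
  qed
  have Aeq: "A = Q ** diag_mat \<mu> ** transpose Q"
  proof -
    have "A = A ** (Q ** transpose Q)" using QQt by simp
    also have "\<dots> = Q ** diag_mat \<mu> ** transpose Q" by (simp add: matrix_mul_assoc AQ)
    finally show ?thesis .
  qed
  have lamP: "\<And>i. lam i = (\<Sum>j\<in>UNIV. (Q$i$j)^2 * \<mu> j)"
  proof -
    fix i
    have "lam i = A $ i $ i" using Aij diag1 dd by (simp add: mult.commute)
    also have "\<dots> = (\<Sum>j\<in>UNIV. (Q$i$j)^2 * \<mu> j)"
    proof -
      have "A $ i $ i = (\<Sum>j\<in>UNIV. (Q ** diag_mat \<mu>) $ i $ j * transpose Q $ j $ i)"
        by (subst Aeq) (simp only: matrix_matrix_mult_def[of "Q ** diag_mat \<mu>" "transpose Q"] vec_lambda_beta)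
      then show ?thesis by (simp add: diag_right transpose_def power2_eq_square mult_ac)
    qed
    finally show "lam i = (\<Sum>j\<in>UNIV. (Q$i$j)^2 * \<mu> j)" .
  qed
  have rows: "\<And>i. (\<Sum>j\<in>UNIV. (Q$i$j)^2) = 1"
  proof -
    fix i
    have "(Q ** transpose Q) $ i $ i = 1" using QQt by (simp add: mat_def)
    then show "(\<Sum>j\<in>UNIV. (Q$i$j)^2) = 1"
      by (simp add: matrix_matrix_mult_def transpose_def power2_eq_square)
  qed
  have cols: "\<And>j. (\<Sum>i\<in>UNIV. (Q$i$j)^2) = 1"
  proof -
    fix j
    have "(transpose Q ** Q) $ j $ j = 1" using QtQ by (simp add: mat_def)
    then show "(\<Sum>i\<in>UNIV. (Q$i$j)^2) = 1"
      by (simp add: matrix_matrix_mult_def transpose_def power2_eq_square)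
  qed
  have DhT: "transpose Dh = Dh" by (simp add: Dh_def diag_mat_def transpose_def vec_eq_iff)
  have Dhv: "\<And>x i. (Dh *v x) $ i = d i * x $ i"
    by (simp add: Dh_def diag_mat_def matrix_vector_mult_def if_distrib[of "\<lambda>x. x * _"] cong: if_cong)
  have mupos: "\<And>j. \<mu> j > 0"
  proof -
    fix j
    have ee: "e j \<bullet> e j = 1" using eo by simp
    then have enz: "e j \<noteq> 0" by auto
    have "Dh *v e j \<noteq> 0"
    proof
      assume "Dh *v e j = 0"
      then have "\<And>i. d i * e j $ i = 0" using Dhv by (metis zero_index)
      then have "e j = 0" using d0 by (simp add: vec_eq_iff) (metis less_irrefl)
      then show False using enz by simp
    qed
    then have pos: "(Dh *v e j) \<bullet> (C *v (Dh *v e j)) > 0" using spd unfolding sym_pos_def_def by blast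
    have "e j \<bullet> (A *v e j) = e j \<bullet> (Dh *v (C *v (Dh *v e j)))"
      by (simp add: A_def matrix_vector_mul_assoc matrix_mul_assoc)
    also have "\<dots> = (Dh *v e j) \<bullet> (C *v (Dh *v e j))" by (rule sym_inner[OF DhT])
    finally have "e j \<bullet> (A *v e j) > 0" using pos by simp
    moreover have "e j \<bullet> (A *v e j) = \<mu> j" using ev ee by simp
    ultimately show "\<mu> j > 0" by simp
  qed
  have charA: "\<And>x. det (x *\<^sub>R mat 1 - A) = (\<Prod>j\<in>UNIV. x - \<mu> j)"
  proof -
    fix x :: real
    have "x *\<^sub>R mat 1 - A = Q ** (x *\<^sub>R mat 1 - diag_mat \<mu>) ** transpose Q"
    proof -
      have "Q ** (x *\<^sub>R mat 1) ** transpose Q = x *\<^sub>R mat 1"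
        using QQt by (simp add: matrix_scalar_ac scalar_matrix_assoc[symmetric])
      then show ?thesis using Aeq
        by (simp add: matrix_sub_ldistrib matrix_sub_rdistrib)
    qed
    then have "det (x *\<^sub>R mat 1 - A) = det Q * det (x *\<^sub>R mat 1 - diag_mat \<mu>) * det (transpose Q)"
      by (simp add: det_mul)
    also have "\<dots> = det (x *\<^sub>R mat 1 - diag_mat \<mu>) * det (Q ** transpose Q)"
      by (simp add: det_mul)
    also have "\<dots> = det (x *\<^sub>R mat 1 - diag_mat \<mu>)" using QQt by simp
    also have "\<dots> = (\<Prod>j\<in>UNIV. x - \<mu> j)"
      by (subst det_diagonal) (auto simp: diag_mat_def mat_def)
    finally show "det (x *\<^sub>R mat 1 - A) = (\<Prod>j\<in>UNIV. x - \<mu> j)" .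
  qed
  have charDC: "\<And>x. det (x *\<^sub>R mat 1 - diag_mat lam ** C) = det (x *\<^sub>R mat 1 - A)"
  proof -
    fix x :: real
    have "x *\<^sub>R mat 1 - diag_mat lam ** C = Dh ** (x *\<^sub>R mat 1 - A) ** Di"
    proof -
      have "\<forall>i j. (x *\<^sub>R mat 1 - diag_mat lam ** C)$i$j = (Dh ** (x *\<^sub>R mat 1 - A) ** Di)$i$j"
      proof (intro allI)
        fix i j
        have r: "(Dh ** (x *\<^sub>R mat 1 - A) ** Di)$i$j = d i * (x * (if i = j then 1 else 0) - d i * C$i$j * d j) * (1 / d j)"
          by (simp add: Dh_def Di_def diag_left diag_right Aij mat_def)
        have l: "(x *\<^sub>R mat 1 - diag_mat lam ** C)$i$j = x * (if i = j then 1 else 0) - lam i * C$i$j"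
          by (simp add: diag_left mat_def)
        have dj: "d j \<noteq> 0" using d0[of j] by simp
        show "(x *\<^sub>R mat 1 - diag_mat lam ** C)$i$j = (Dh ** (x *\<^sub>R mat 1 - A) ** Di)$i$j"
          unfolding l r using dd[of i] dj by (cases "i = j") (simp_all add: field_simps)
      qed
      then show ?thesis by (simp add: vec_eq_iff)
    qed
    then have "det (x *\<^sub>R mat 1 - diag_mat lam ** C) = det Dh * det Di * det (x *\<^sub>R mat 1 - A)"
      by (simp add: det_mul)
    moreover have "det Dh * det Di = 1"
      using d0 by (simp add: Dh_def Di_def det_diag_mat prod.distrib[symmetric] less_imp_neq[OF d0, symmetric])
    ultimately show "det (x *\<^sub>R mat 1 - diag_mat lam ** C) = det (x *\<^sub>R mat 1 - A)" by simp
  qed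
  have "\<forall>x. (\<Prod>i\<in>UNIV. x - \<mu> i) = (\<Prod>i\<in>UNIV. x - lamh i)"
    using eig charA charDC unfolding eigenvalues_of_def by simp
  then have "\<And>c. card {i. \<mu> i = c} = card {i. lamh i = c}" by (rule fiber_card_eq)
  then obtain \<sigma> where \<sigma>: "\<sigma> permutes (UNIV::'n set)" "\<forall>i. lamh (\<sigma> i) = \<mu> i"
    using perm_from_fibers by blast
  have lamhpos: "\<forall>i. lamh i > 0"
  proof
    fix k
    obtain j where "k = \<sigma> j" using \<sigma>(1) by (metis permutes_surj surj_f_inv_f)
    then show "lamh k > 0" using \<sigma>(2) mupos by simp
  qed
  define H where "H = {(\<chi> i. \<mu> (\<pi> i)) | \<pi>. \<pi> permutes (UNIV::'n set)}"
  have finH: "finite H"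
  proof -
    have "H = (\<lambda>\<pi>. (\<chi> i. \<mu> (\<pi> i))) ` {\<pi>. \<pi> permutes (UNIV::'n set)}" unfolding H_def by auto
    then show ?thesis using finite_permutations[of "UNIV::'n set"] by simp
  qed
  have inh: "(\<chi> i. \<Sum>j\<in>UNIV. (Q$i$j)^2 * \<mu> j) \<in> convex hull H"
    unfolding H_def by (rule ds_in_hull) (auto simp: rows cols)
  then obtain u where u: "\<forall>x\<in>H. 0 \<le> u x" "sum u H = 1" "(\<Sum>x\<in>H. u x *\<^sub>R x) = (\<chi> i. \<Sum>j\<in>UNIV. (Q$i$j)^2 * \<mu> j)"
    using convex_hull_finite[OF finH] by auto
  have lamu: "\<forall>i. lam i = (\<Sum>x\<in>H. u x * x$i)"
  proof
    fix i
    have "(\<Sum>x\<in>H. u x * x$i) = (\<Sum>x\<in>H. u x *\<^sub>R x) $ i" by simp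
    then show "lam i = (\<Sum>x\<in>H. u x * x$i)" using u(3) lamP by simp
  qed
  have Hperm: "\<forall>x\<in>H. \<exists>\<pi>. \<pi> permutes (UNIV::'n set) \<and> (\<forall>i. x$i = lamh (\<pi> i))"
  proof
    fix x assume "x \<in> H"
    then obtain \<pi> where \<pi>: "\<pi> permutes UNIV" "x = (\<chi> i. \<mu> (\<pi> i))" unfolding H_def by blast
    have "\<sigma> \<circ> \<pi> permutes UNIV" using \<pi>(1) \<sigma>(1) by (rule permutes_compose)
    moreover have "\<forall>i. x$i = lamh ((\<sigma> \<circ> \<pi>) i)" using \<pi>(2) \<sigma>(2) by simp
    ultimately show "\<exists>\<pi>. \<pi> permutes (UNIV::'n set) \<and> (\<forall>i. x$i = lamh (\<pi> i))" by blast
  qed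
  show ?thesis using lamhpos finH Hperm u(1,2) lamu by blast
qed

lemma perm_invariance:
  fixes M :: "'a measure" and X :: "'n::finite option \<Rightarrow> 'a \<Rightarrow> real" and \<sigma> :: "'n \<Rightarrow> 'n" and g :: "('n option \<Rightarrow> real) \<Rightarrow> real"
  assumes P: "prob_space M" and ind: "prob_space.indep_vars M (\<lambda>_. borel) X UNIV"
    and same: "\<forall>i j. distr M borel (X (Some i)) = distr M borel (X (Some j))"
    and sig: "\<sigma> permutes UNIV"
    and g: "g \<in> borel_measurable (PiM UNIV (\<lambda>_::'n option. (borel::real measure)))"
  shows "integrable M (\<lambda>\<omega>. g (\<lambda>k. X (map_option \<sigma> k) \<omega>)) = integrable M (\<lambda>\<omega>. g (\<lambda>k. X k \<omega>))
       \<and> (\<integral>\<omega>. g (\<lambda>k. X (map_option \<sigma> k) \<omega>) \<partial>M) = (\<integral>\<omega>. g (\<lambda>k. X k \<omega>) \<partial>M)"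
proof -
  interpret prob_space M by (rule P)
  have rv: "\<And>k. X k \<in> borel_measurable M" using ind unfolding indep_vars_def by blast
  define E where "E = PiM UNIV (\<lambda>_::'n option. (borel::real measure))"
  define N where "N k = distr M borel (X k)" for k
  define \<tau> where "\<tau> = map_option \<sigma>"
  have D1: "distr M E (\<lambda>\<omega>. \<lambda>k\<in>UNIV. X k \<omega>) = PiM UNIV N"
    using indep_vars_iff_distr_eq_PiM[where I=UNIV and X=X and M'="\<lambda>_. borel"] ind rv unfolding E_def N_def by simp
  have N\<tau>: "\<And>k. N (\<tau> k) = N k"
  proof -
    fix k show "N (\<tau> k) = N k" using same by (cases k) (auto simp: N_def \<tau>_def)
  qed
  have inj\<sigma>: "inj \<sigma>" using sig permutes_inj by blast
  have inj\<tau>: "inj \<tau>" unfolding \<tau>_def using inj\<sigma> by (simp add: option.inj_map)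
  have R: "distr (PiM UNIV N) (PiM UNIV (\<lambda>i. N (\<tau> i))) (\<lambda>\<omega>. \<lambda>n\<in>UNIV. \<omega> (\<tau> n)) = PiM UNIV (\<lambda>i. N (\<tau> i))"
    by (rule distr_PiM_reindex) (auto simp: N_def inj\<tau> intro: prob_space_distr rv)
  have mX: "(\<lambda>\<omega>. \<lambda>k\<in>UNIV. X k \<omega>) \<in> measurable M E" unfolding E_def
    by (intro measurable_restrict rv)
  have mR: "(\<lambda>z. \<lambda>n\<in>UNIV. z (\<tau> n)) \<in> measurable E E" unfolding E_def
    by (intro measurable_restrict measurable_component_singleton) auto
  have setsE: "sets E = sets (PiM UNIV (\<lambda>i. N (\<tau> i)))" unfolding E_def N_def
    by (intro sets_PiM_cong) auto
  have D2: "distr M E (\<lambda>\<omega>. \<lambda>k\<in>UNIV. X (\<tau> k) \<omega>) = PiM UNIV N"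
  proof -
    have "distr M E (\<lambda>\<omega>. \<lambda>k\<in>UNIV. X (\<tau> k) \<omega>) = distr M E ((\<lambda>z. \<lambda>n\<in>UNIV. z (\<tau> n)) \<circ> (\<lambda>\<omega>. \<lambda>k\<in>UNIV. X k \<omega>))"
      by (simp add: comp_def)
    also have "\<dots> = distr (distr M E (\<lambda>\<omega>. \<lambda>k\<in>UNIV. X k \<omega>)) E (\<lambda>z. \<lambda>n\<in>UNIV. z (\<tau> n))"
      by (rule distr_distr[symmetric, OF mR mX])
    also have "\<dots> = distr (PiM UNIV N) (PiM UNIV (\<lambda>i. N (\<tau> i))) (\<lambda>z. \<lambda>n\<in>UNIV. z (\<tau> n))"
      unfolding D1 by (rule distr_cong) (auto simp: setsE)
    also have "\<dots> = PiM UNIV N" using R N\<tau> by simp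
    finally show ?thesis .
  qed
  have mX2: "(\<lambda>\<omega>. \<lambda>k\<in>UNIV. X (\<tau> k) \<omega>) \<in> measurable M E" unfolding E_def
    by (intro measurable_restrict rv)
  have gE: "g \<in> borel_measurable E" using g unfolding E_def .
  have I1: "integrable M (\<lambda>\<omega>. g (\<lambda>k. X (\<tau> k) \<omega>)) = integrable (PiM UNIV N) g"
    using integrable_distr_eq[OF mX2 gE] D2 by (simp add: restrict_UNIV)
  have I2: "integrable M (\<lambda>\<omega>. g (\<lambda>k. X k \<omega>)) = integrable (PiM UNIV N) g"
    using integrable_distr_eq[OF mX gE] D1 by (simp add: restrict_UNIV)
  have J1: "(\<integral>\<omega>. g (\<lambda>k. X (\<tau> k) \<omega>) \<partial>M) = integral\<^sup>L (PiM UNIV N) g"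
    using integral_distr[OF mX2 gE] D2 by (simp add: restrict_UNIV)
  have J2: "(\<integral>\<omega>. g (\<lambda>k. X k \<omega>) \<partial>M) = integral\<^sup>L (PiM UNIV N) g"
    using integral_distr[OF mX gE] D1 by (simp add: restrict_UNIV)
  show ?thesis using I1 I2 J1 J2 unfolding \<tau>_def by simp
qed

lemma ln_convex:
  fixes s :: real
  assumes "s \<ge> 0"
  shows "convex_on {0<..} (\<lambda>y. ln (1 + s / y))"
proof (rule convex_on_realI[where f' = "\<lambda>y. 1 / (y + s) - 1 / y"])
  show "connected {0::real<..}" by simp
next
  fix y :: real assume y: "y \<in> {0<..}"
  then have y0: "y > 0" by simp
  have d: "((\<lambda>y. ln (y + s) - ln y) has_real_derivative (1 / (y + s) - 1 / y)) (at y)"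
    using y0 assms by (auto intro!: derivative_eq_intros)
  have eq: "\<And>z. z \<in> {0<..} \<Longrightarrow> ln (z + s) - ln z = ln (1 + s / z)"
  proof -
    fix z :: real assume "z \<in> {0<..}"
    then have z: "z > 0" by simp
    have "1 + s / z = (z + s) / z" using z by (simp add: field_simps)
    then show "ln (z + s) - ln z = ln (1 + s / z)" using z assms by (simp add: ln_div)
  qed
  show "((\<lambda>y. ln (1 + s / y)) has_real_derivative (1 / (y + s) - 1 / y)) (at y)"
    by (rule has_field_derivative_transform_within_open[OF d open_greaterThan y eq])
next
  fix x y :: real assume x: "x \<in> {0<..}" and y: "y \<in> {0<..}" and xy: "x \<le> y"
  have "1 / (y + s) - 1 / y = - (s / (y * (y + s)))" using y assms by (simp add: field_simps)
  moreover have "1 / (x + s) - 1 / x = - (s / (x * (x + s)))" using x assms by (simp add: field_simps)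
  moreover have "s / (y * (y + s)) \<le> s / (x * (x + s))"
  proof (rule divide_left_mono)
    show "x * (x + s) \<le> y * (y + s)" using x xy assms by (intro mult_mono) auto
    show "0 \<le> s" by (rule assms)
    show "0 < y * (y + s) * (x * (x + s))" using x y assms by simp
  qed
  ultimately show "1 / (x + s) - 1 / x \<le> 1 / (y + s) - 1 / y" by simp
qed

theorem mainTheorem5:
  fixes M :: "'a measure"
    and lam lamh :: "'n::finite \<Rightarrow> real"
    and C :: "real^'n^'n"
    and \<mu>c :: real
    and G :: "'n \<Rightarrow> 'a \<Rightarrow> real"
    and S :: "'a \<Rightarrow> real"
  assumes "prob_space M"
    and "\<mu>c > 0"
    and "\<forall>i. lam i > 0"
    and "sym_pos_def C"
    and "\<forall>i. C $ i $ i = 1"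
    and "eigenvalues_of (diag_mat lam ** C) lamh"
    and "prob_space.indep_vars M (\<lambda>_. borel) G UNIV"
    and "\<forall>i. distributed M lborel (G i) (\<lambda>x. ennreal (gamma_density \<mu>c x))"
    and "S \<in> borel_measurable M"
    and "\<forall>\<omega>\<in>space M. S \<omega> \<ge> 0"
    and "prob_space.indep_vars M (\<lambda>_. borel) (\<lambda>k. case k of None \<Rightarrow> S | Some i \<Rightarrow> G i) (UNIV :: 'n option set)"
  shows "cx_le M (\<lambda>\<omega>. \<Sum>i\<in>UNIV. lam i * G i \<omega>) (\<lambda>\<omega>. \<Sum>i\<in>UNIV. lamh i * G i \<omega>)
       \<and> ((integrable M (\<lambda>\<omega>. ln (1 + S \<omega> / (\<Sum>i\<in>UNIV. lam i * G i \<omega>)))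
            \<and> integrable M (\<lambda>\<omega>. ln (1 + S \<omega> / (\<Sum>i\<in>UNIV. lamh i * G i \<omega>))))
          \<longrightarrow> (\<integral>\<omega>. ln (1 + S \<omega> / (\<Sum>i\<in>UNIV. lamh i * G i \<omega>)) \<partial>M)
              \<ge> (\<integral>\<omega>. ln (1 + S \<omega> / (\<Sum>i\<in>UNIV. lam i * G i \<omega>)) \<partial>M))"
proof -
  interpret prob_space M by (rule assms(1))
  define X where "X = (\<lambda>k. case k of None \<Rightarrow> S | Some i \<Rightarrow> G i)"
  have indX: "indep_vars (\<lambda>_. borel) X (UNIV :: 'n option set)" using assms(11) unfolding X_def .
  have XS: "\<And>i. X (Some i) = G i" and XN: "X None = S" by (simp_all add: X_def)
  obtain H u where lamhpos: "\<forall>i. lamh i > 0" and finH: "finite H"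
    and Hperm: "\<forall>x\<in>H. \<exists>\<pi>. \<pi> permutes (UNIV::'n set) \<and> (\<forall>i. x$i = lamh (\<pi> i))"
    and u0: "\<forall>x\<in>H. u x \<ge> 0" and u1: "sum u H = 1" and lamu: "\<forall>i. lam i = (\<Sum>x\<in>H. u x * x$i)"
    using stepA[OF assms(3,4,5,6)] by blast
  have Hne: "H \<noteq> {}" using u1 by auto
  define f where "f x = ennreal (gamma_density \<mu>c x)" for x
  have dist: "\<And>i. distr M lborel (G i) = density lborel f \<and> f \<in> borel_measurable lborel \<and> G i \<in> measurable M lborel"
    using assms(8) unfolding distributed_def f_def by blast
  have Gm: "\<And>i. G i \<in> borel_measurable M" using dist by (metis measurable_lborel1)
  have em: "\<And>i A. A \<in> sets borel \<Longrightarrow> emeasure (distr M borel (G i)) A = emeasure (density lborel f) A"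
  proof -
    fix i A assume A: "A \<in> sets (borel :: real measure)"
    have "emeasure (distr M borel (G i)) A = emeasure M (G i -` A \<inter> space M)"
      using A Gm by (simp add: emeasure_distr)
    also have "\<dots> = emeasure (distr M lborel (G i)) A"
    proof -
      have "G i \<in> measurable M lborel" using dist by blast
      then show ?thesis using A by (intro emeasure_distr[symmetric]) auto
    qed
    also have "\<dots> = emeasure (density lborel f) A" using dist by simp
    finally show "emeasure (distr M borel (G i)) A = emeasure (density lborel f) A" .
  qed
  have same: "\<forall>i j. distr M borel (X (Some i)) = distr M borel (X (Some j))"
  proof (intro allI)
    fix i j
    show "distr M borel (X (Some i)) = distr M borel (X (Some j))"
      unfolding XS by (rule measure_eqI) (simp_all add: em)
  qed
  have AEpos: "AE \<omega> in M. \<forall>i\<in>UNIV. G i \<omega> > 0"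
  proof (rule AE_finite_allI)
    show "finite (UNIV::'n set)" by simp
  next
    fix i
    have "AE x in density lborel f. x > 0"
    proof -
      have "AE x in lborel. 0 < f x \<longrightarrow> x > 0"
        by (rule AE_I2) (auto simp: f_def gamma_density_def)
      then show ?thesis using dist by (simp add: AE_density)
    qed
    moreover have eqd: "distr M lborel (G i) = density lborel f" using dist by blast
    ultimately have "AE x in distr M lborel (G i). x > 0" by (simp only: eqd)
    then show "AE \<omega> in M. G i \<omega> > 0" using dist by (intro AE_distrD[of "G i" M lborel]) auto
  qed
  define Y where "Y x \<omega> = (\<Sum>i\<in>UNIV. x $ i * G i \<omega>)" for x :: "real^'n" and \<omega>
  have Irep: "\<And>\<omega>. (\<Sum>i\<in>UNIV. lam i * G i \<omega>) = (\<Sum>x\<in>H. u x * Y x \<omega>)"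
  proof -
    fix \<omega>
    have "(\<Sum>i\<in>UNIV. lam i * G i \<omega>) = (\<Sum>i\<in>UNIV. \<Sum>x\<in>H. u x * (x $ i * G i \<omega>))"
      using lamu by (simp add: sum_distrib_right mult.assoc)
    also have "\<dots> = (\<Sum>x\<in>H. \<Sum>i\<in>UNIV. u x * (x $ i * G i \<omega>))" by (rule sum.swap)
    also have "\<dots> = (\<Sum>x\<in>H. u x * Y x \<omega>)" by (simp add: Y_def sum_distrib_left)
    finally show "(\<Sum>i\<in>UNIV. lam i * G i \<omega>) = (\<Sum>x\<in>H. u x * Y x \<omega>)" .
  qed
  have Yperm: "\<exists>\<sigma>. \<sigma> permutes (UNIV::'n set) \<and> (\<forall>\<omega>. Y x \<omega> = (\<Sum>j\<in>UNIV. lamh j * G (\<sigma> j) \<omega>))" if xH: "x \<in> H" for x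
  proof -
    obtain \<pi> where \<pi>: "\<pi> permutes (UNIV::'n set)" "\<forall>i. x$i = lamh (\<pi> i)" using Hperm xH by blast
    have "\<forall>\<omega>. Y x \<omega> = (\<Sum>j\<in>UNIV. lamh j * G (inv \<pi> j) \<omega>)"
    proof
      fix \<omega>
      have "(\<Sum>j\<in>UNIV. lamh j * G (inv \<pi> j) \<omega>) = (\<Sum>i\<in>UNIV. lamh (\<pi> i) * G (inv \<pi> (\<pi> i)) \<omega>)"
        using sum.permute[OF \<pi>(1), of "\<lambda>j. lamh j * G (inv \<pi> j) \<omega>"] by (simp add: comp_def)
      also have "\<dots> = Y x \<omega>" using \<pi> by (simp add: Y_def permutes_inverses(2))
      finally show "Y x \<omega> = (\<Sum>j\<in>UNIV. lamh j * G (inv \<pi> j) \<omega>)" by simp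
    qed
    then show ?thesis using permutes_inv[OF \<pi>(1)] by blast
  qed
  have Ypos: "\<And>x \<omega>. x \<in> H \<Longrightarrow> (\<forall>i\<in>UNIV. G i \<omega> > 0) \<Longrightarrow> Y x \<omega> > 0"
  proof -
    fix x \<omega> assume xH: "x \<in> H" and Gp: "\<forall>i\<in>UNIV. G i \<omega> > 0"
    obtain \<pi> where \<pi>: "\<forall>i. x$i = lamh (\<pi> i)" using Hperm xH by blast
    show "Y x \<omega> > 0" unfolding Y_def
      by (rule sum_pos) (use \<pi> lamhpos Gp in auto)
  qed
  have lin_meas: "(\<lambda>z. \<Sum>j\<in>UNIV. lamh j * z (Some j)) \<in> borel_measurable (PiM UNIV (\<lambda>_::'n option. (borel::real measure)))"
    by measurable
  have DI: "integrable M (\<lambda>\<omega>. g (\<lambda>k. X k \<omega>)) \<longrightarrow> integrable M (\<lambda>\<omega>. h (S \<omega>) (Y x \<omega>))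
            \<and> (\<integral>\<omega>. h (S \<omega>) (Y x \<omega>) \<partial>M) = (\<integral>\<omega>. g (\<lambda>k. X k \<omega>) \<partial>M)"
    if xH: "x \<in> H" and g: "g \<in> borel_measurable (PiM UNIV (\<lambda>_::'n option. (borel::real measure)))"
      and gh: "\<And>z. g z = h (z None) (\<Sum>j\<in>UNIV. lamh j * z (Some j))"
    for x g and h :: "real \<Rightarrow> real \<Rightarrow> real"
  proof -
    obtain \<sigma> where \<sigma>: "\<sigma> permutes (UNIV::'n set)" "\<forall>\<omega>. Y x \<omega> = (\<Sum>j\<in>UNIV. lamh j * G (\<sigma> j) \<omega>)"
      using Yperm[OF xH] by blast
    have eq: "\<And>\<omega>. g (\<lambda>k. X (map_option \<sigma> k) \<omega>) = h (S \<omega>) (Y x \<omega>)"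
      using \<sigma>(2) by (simp add: gh X_def)
    show ?thesis using perm_invariance[OF assms(1) indX same \<sigma>(1) g] unfolding eq by simp
  qed
  have part1: "cx_le M (\<lambda>\<omega>. \<Sum>i\<in>UNIV. lam i * G i \<omega>) (\<lambda>\<omega>. \<Sum>i\<in>UNIV. lamh i * G i \<omega>)"
    unfolding cx_le_def
  proof (intro allI impI)
    fix \<phi> :: "real \<Rightarrow> real"
    assume conv: "convex_on UNIV \<phi>" and int1: "integrable M (\<lambda>\<omega>. \<phi> (\<Sum>i\<in>UNIV. lam i * G i \<omega>))"
      and int2: "integrable M (\<lambda>\<omega>. \<phi> (\<Sum>i\<in>UNIV. lamh i * G i \<omega>))"
    have \<phi>m: "\<phi> \<in> borel_measurable borel"
      by (rule borel_measurable_continuous_onI, rule convex_on_continuous) (use conv in auto)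
    define g where "g z = \<phi> (\<Sum>j\<in>UNIV. lamh j * z (Some j))" for z :: "'n option \<Rightarrow> real"
    have gm: "g \<in> borel_measurable (PiM UNIV (\<lambda>_::'n option. (borel::real measure)))"
      unfolding g_def using measurable_compose[OF lin_meas \<phi>m] by simp
    have gX: "\<And>\<omega>. g (\<lambda>k. X k \<omega>) = \<phi> (\<Sum>i\<in>UNIV. lamh i * G i \<omega>)" by (simp add: g_def X_def)
    have DIx: "\<And>x. x \<in> H \<Longrightarrow> integrable M (\<lambda>\<omega>. \<phi> (Y x \<omega>)) \<and> (\<integral>\<omega>. \<phi> (Y x \<omega>) \<partial>M) = (\<integral>\<omega>. \<phi> (\<Sum>i\<in>UNIV. lamh i * G i \<omega>) \<partial>M)"
      using DI[OF _ gm, of _ "\<lambda>s y. \<phi> y"] int2 unfolding gX by (simp add: g_def)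
    have pw: "\<And>\<omega>. \<phi> (\<Sum>i\<in>UNIV. lam i * G i \<omega>) \<le> (\<Sum>x\<in>H. u x * \<phi> (Y x \<omega>))"
    proof -
      fix \<omega>
      have "\<phi> (\<Sum>x\<in>H. u x *\<^sub>R Y x \<omega>) \<le> (\<Sum>x\<in>H. u x * \<phi> (Y x \<omega>))"
        by (rule convex_on_sum[OF finH Hne conv]) (use u1 u0 in auto)
      then show "\<phi> (\<Sum>i\<in>UNIV. lam i * G i \<omega>) \<le> (\<Sum>x\<in>H. u x * \<phi> (Y x \<omega>))" using Irep by simp
    qed
    have intx: "integrable M (\<lambda>\<omega>. u x * \<phi> (Y x \<omega>))" if xH: "x \<in> H" for x
    proof -
      have "integrable M (\<lambda>\<omega>. \<phi> (Y x \<omega>))" using DIx[OF xH] by blast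
      then show ?thesis by simp
    qed
    have intR: "integrable M (\<lambda>\<omega>. \<Sum>x\<in>H. u x * \<phi> (Y x \<omega>))"
      using Bochner_Integration.integrable_sum[where I=H and M=M and f="\<lambda>x \<omega>. u x * \<phi> (Y x \<omega>)"] intx by blast
    have "(\<integral>\<omega>. \<phi> (\<Sum>i\<in>UNIV. lam i * G i \<omega>) \<partial>M) \<le> (\<integral>\<omega>. (\<Sum>x\<in>H. u x * \<phi> (Y x \<omega>)) \<partial>M)"
      by (rule integral_mono[OF int1 intR pw])
    also have "\<dots> = (\<Sum>x\<in>H. u x * (\<integral>\<omega>. \<phi> (Y x \<omega>) \<partial>M))"
    proof -
      have "(\<integral>\<omega>. (\<Sum>x\<in>H. u x * \<phi> (Y x \<omega>)) \<partial>M) = (\<Sum>x\<in>H. (\<integral>\<omega>. u x * \<phi> (Y x \<omega>) \<partial>M))"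
        using Bochner_Integration.integral_sum[where I=H and M=M and f="\<lambda>x \<omega>. u x * \<phi> (Y x \<omega>)"] intx by blast
      then show ?thesis by simp
    qed
    also have "\<dots> = (\<Sum>x\<in>H. u x * (\<integral>\<omega>. \<phi> (\<Sum>i\<in>UNIV. lamh i * G i \<omega>) \<partial>M))"
      using DIx by (intro sum.cong) auto
    also have "\<dots> = (\<integral>\<omega>. \<phi> (\<Sum>i\<in>UNIV. lamh i * G i \<omega>) \<partial>M)"
      using u1 by (simp add: sum_distrib_right[symmetric])
    finally show "(\<integral>\<omega>. \<phi> (\<Sum>i\<in>UNIV. lam i * G i \<omega>) \<partial>M) \<le> (\<integral>\<omega>. \<phi> (\<Sum>i\<in>UNIV. lamh i * G i \<omega>) \<partial>M)" .
  qed
  have part2: "(\<integral>\<omega>. ln (1 + S \<omega> / (\<Sum>i\<in>UNIV. lamh i * G i \<omega>)) \<partial>M)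
              \<ge> (\<integral>\<omega>. ln (1 + S \<omega> / (\<Sum>i\<in>UNIV. lam i * G i \<omega>)) \<partial>M)"
    if int1: "integrable M (\<lambda>\<omega>. ln (1 + S \<omega> / (\<Sum>i\<in>UNIV. lam i * G i \<omega>)))"
      and int2: "integrable M (\<lambda>\<omega>. ln (1 + S \<omega> / (\<Sum>i\<in>UNIV. lamh i * G i \<omega>)))"
  proof -
    define g where "g z = ln (1 + z None / (\<Sum>j\<in>UNIV. lamh j * z (Some j)))" for z :: "'n option \<Rightarrow> real"
    have gm: "g \<in> borel_measurable (PiM UNIV (\<lambda>_::'n option. (borel::real measure)))"
      unfolding g_def by measurable
    have gX: "\<And>\<omega>. g (\<lambda>k. X k \<omega>) = ln (1 + S \<omega> / (\<Sum>i\<in>UNIV. lamh i * G i \<omega>))" by (simp add: g_def X_def)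
    have DIx: "\<And>x. x \<in> H \<Longrightarrow> integrable M (\<lambda>\<omega>. ln (1 + S \<omega> / Y x \<omega>))
        \<and> (\<integral>\<omega>. ln (1 + S \<omega> / Y x \<omega>) \<partial>M) = (\<integral>\<omega>. ln (1 + S \<omega> / (\<Sum>i\<in>UNIV. lamh i * G i \<omega>)) \<partial>M)"
      using DI[OF _ gm, of _ "\<lambda>s y. ln (1 + s / y)"] int2 unfolding gX by (simp add: g_def)
    have pw: "AE \<omega> in M. ln (1 + S \<omega> / (\<Sum>i\<in>UNIV. lam i * G i \<omega>)) \<le> (\<Sum>x\<in>H. u x * ln (1 + S \<omega> / Y x \<omega>))"
      using AEpos AE_space
    proof (eventually_elim)
      case (elim \<omega>)
      have S0: "S \<omega> \<ge> 0" using assms(10) elim(2) by blast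
      have "ln (1 + S \<omega> / (\<Sum>x\<in>H. u x *\<^sub>R Y x \<omega>)) \<le> (\<Sum>x\<in>H. u x * ln (1 + S \<omega> / Y x \<omega>))"
        by (rule convex_on_sum[OF finH Hne ln_convex[OF S0]]) (use u1 u0 Ypos elim(1) in auto)
      then show ?case using Irep by simp
    qed
    have intx: "integrable M (\<lambda>\<omega>. u x * ln (1 + S \<omega> / Y x \<omega>))" if xH: "x \<in> H" for x
    proof -
      have "integrable M (\<lambda>\<omega>. ln (1 + S \<omega> / Y x \<omega>))" using DIx[OF xH] by blast
      then show ?thesis by simp
    qed
    have intR: "integrable M (\<lambda>\<omega>. \<Sum>x\<in>H. u x * ln (1 + S \<omega> / Y x \<omega>))"
      using Bochner_Integration.integrable_sum[where I=H and M=M and f="\<lambda>x \<omega>. u x * ln (1 + S \<omega> / Y x \<omega>)"] intx by blast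
    have "(\<integral>\<omega>. ln (1 + S \<omega> / (\<Sum>i\<in>UNIV. lam i * G i \<omega>)) \<partial>M) \<le> (\<integral>\<omega>. (\<Sum>x\<in>H. u x * ln (1 + S \<omega> / Y x \<omega>)) \<partial>M)"
      by (rule integral_mono_AE[OF int1 intR pw])
    also have "\<dots> = (\<Sum>x\<in>H. u x * (\<integral>\<omega>. ln (1 + S \<omega> / Y x \<omega>) \<partial>M))"
    proof -
      have "(\<integral>\<omega>. (\<Sum>x\<in>H. u x * ln (1 + S \<omega> / Y x \<omega>)) \<partial>M) = (\<Sum>x\<in>H. (\<integral>\<omega>. u x * ln (1 + S \<omega> / Y x \<omega>) \<partial>M))"
        using Bochner_Integration.integral_sum[where I=H and M=M and f="\<lambda>x \<omega>. u x * ln (1 + S \<omega> / Y x \<omega>)"] intx by blast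
      then show ?thesis by simp
    qed
    also have "\<dots> = (\<Sum>x\<in>H. u x * (\<integral>\<omega>. ln (1 + S \<omega> / (\<Sum>i\<in>UNIV. lamh i * G i \<omega>)) \<partial>M))"
      using DIx by (intro sum.cong) auto
    also have "\<dots> = (\<integral>\<omega>. ln (1 + S \<omega> / (\<Sum>i\<in>UNIV. lamh i * G i \<omega>)) \<partial>M)"
      using u1 by (simp add: sum_distrib_right[symmetric])
    finally show ?thesis .
  qed
  show ?thesis using part1 part2 by blast
qed

end
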